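(* Let $P,Q$ be persistence diagrams satisfying the standing assumptions, and let $d_T^{per}(P,Q)$ be defined from a shifted quadtree as in the context (for any fixed shift). Then there is an absolute constant $C$ such that $d_W(P,Q)\le C\cdot d_T^{per}(P,Q)$.
   Context: A persistence diagram is a finite multiset of points in $\mathbb{R}^2$. Let $L=\{(x,x)\mid x\in\mathbb{R}\}$ be the diagonal and $\pi(p)=\big(\tfrac{p.x+p.y}{2},\tfrac{p.x+p.y}{2}\big)$. An augmented matching for finite multisets $A,B\subset\mathbb{R}^2$ is a subset $\Gamma\subset (A\cup\pi(B))\times(B\cup\pi(A))$ such that each element of $A$ and of $B$ (with multiplicity) appears in exactly one pair, and each pair $(a,b)$ is of the form (1) $a\in A,b\in B$, (2) $a\in A,b=\pi(a)$, or (3) $a=\pi(b),b\in B$. $d_W(P,Q)=\min_\Gamma\sum_{(p,q)\in\Gamma}\|p-q\|_2$ over augmented matchings for $P,Q$. Standing assumptions: with $X=P\uplus Q$, the minimum distance between distinct points of $X$ is $1$, the minimum distance from any point of $X$ to $L$ is $1$, $X\subseteq[0,\Delta]^2$ with $\Delta$ a power of $2$. Quadtree: $H$ is $[-\Delta,\Delta]^2$ translated by a vector with coordinates in $[0,\Delta]$ (chosen uniformly at random). For $i=-1,0,\dots,\log_2\Delta$, $G_i$ is the grid of cells of side $2^i$ obtained by repeatedly halving $H$ in each coordinate. A cell is terminal if it intersects $L$. With $P(c),Q(c)$ the number of points of $P$, $Q$ in cell $c$, $$d_T^{per}(P,Q)=\sum_{i=-1}^{\log_2\Delta}2^i\sum_{c\in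 G_i,\ c\text{ non-terminal}}|P(c)-Q(c)|.$$ *)

theory Defs
  imports "HOL-Analysis.Analysis" "HOL-Library.Multiset"
begin

type_synonym pt = "real \<times> real"

definition diag :: "pt set" where
  "diag = {(x, x) | x. True}"

definition proj :: "pt \<Rightarrow> pt" where
  "proj p = ((fst p + snd p) / 2, (fst p + snd p) / 2)"

text \<open>Augmented matchings between finite multisets A, B (as a multiset of pairs, to respect
  multiplicities): pairs of type (1) from A x B, type (2) (a, pi a), type (3) (pi b, b),
  with every element of A and of B occurring in exactly one pair.\<close>
definition aug_matching :: "pt multiset \<Rightarrow> pt multiset \<Rightarrow> (pt \<times> pt) multiset \<Rightarrow> bool" where
  "aug_matching A B \<Gamma> \<longleftrightarrow>
     (\<exists>\<Gamma>1 A2 B3.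
        \<Gamma> = \<Gamma>1 + image_mset (\<lambda>a. (a, proj a)) A2 + image_mset (\<lambda>b. (proj b, b)) B3 \<and>
        A = image_mset fst \<Gamma>1 + A2 \<and>
        B = image_mset snd \<Gamma>1 + B3)"

definition match_cost :: "(pt \<times> pt) multiset \<Rightarrow> real" where
  "match_cost \<Gamma> = sum_mset (image_mset (\<lambda>(p, q). dist p q) \<Gamma>)"

definition d_W :: "pt multiset \<Rightarrow> pt multiset \<Rightarrow> real" where
  "d_W P Q = Inf {match_cost \<Gamma> | \<Gamma>. aug_matching P Q \<Gamma>}"

text \<open>Delta = 2 powr k, shift vector v, so H = [v1-Delta, v1+Delta] x [v2-Delta, v2+Delta].
  At level i (side s = 2 powr i) the grid has N = 2^(k+1-i) cells per axis, indexed by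
  a, b < N; the cell (a,b) is the square
  [o1 + a s, o1 + (a+1) s] x [o2 + b s, o2 + (b+1) s] with org = v - (Delta, Delta).
  Points are assigned to cells by half-open intervals [., .), the last interval of each axis
  being closed, so that the cells of each level partition H.\<close>

definition grid_N :: "int \<Rightarrow> int \<Rightarrow> nat" where
  "grid_N k i = 2 ^ nat (k + 1 - i)"

definition in_slab :: "real \<Rightarrow> real \<Rightarrow> nat \<Rightarrow> nat \<Rightarrow> real \<Rightarrow> bool" where
  "in_slab org s N a x \<longleftrightarrow>
     org + real a * s \<le> x \<and> (x < org + real (a + 1) * s \<or> (a + 1 = N \<and> x = org + real N * s))"

definition cell_square :: "pt \<Rightarrow> real \<Rightarrow> nat \<Rightarrow> nat \<Rightarrow> pt set" where
  "cell_square org s a b =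
     {p. fst org + real a * s \<le> fst p \<and> fst p \<le> fst org + real (a + 1) * s \<and>
         snd org + real b * s \<le> snd p \<and> snd p \<le> snd org + real (b + 1) * s}"

definition cell_count :: "pt multiset \<Rightarrow> pt \<Rightarrow> real \<Rightarrow> nat \<Rightarrow> nat \<Rightarrow> nat \<Rightarrow> real" where
  "cell_count P org s N a b =
     real (size (filter_mset (\<lambda>p. in_slab (fst org) s N a (fst p) \<and> in_slab (snd org) s N b (snd p)) P))"

definition d_T_per :: "int \<Rightarrow> pt \<Rightarrow> pt multiset \<Rightarrow> pt multiset \<Rightarrow> real" where
  "d_T_per k v P Q =
     (let \<Delta> = 2 powr real_of_int k; org = (fst v - \<Delta>, snd v - \<Delta>) in
      \<Sum>i\<in>{-1..k}. 2 powr real_of_int i *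
        (\<Sum>a<grid_N k i. \<Sum>b<grid_N k i.
           if cell_square org (2 powr real_of_int i) a b \<inter> diag \<noteq> {} then 0
           else \<bar>cell_count P org (2 powr real_of_int i) (grid_N k i) a b
                 - cell_count Q org (2 powr real_of_int i) (grid_N k i) a b\<bar>))"

end

theory Submission imports Defs begin

lemma slab_exists:
  assumes "s > 0" "N \<ge> 1" "c0 \<le> x" "x \<le> c0 + real N * s"
  shows "\<exists>a<N. in_slab c0 s N a x"
proof (cases "x = c0 + real N * s")
  case True
  then show ?thesis using assms
    by (intro exI[of _ "N - 1"]) (auto simp: in_slab_def of_nat_diff algebra_simps intro!: mult_left_mono)
next
  case False
  define a where "a = nat \<lfloor>(x - c0) / s\<rfloor>"
  have f0: "0 \<le> (x - c0) / s" using assms by simp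
  have ra: "real a = of_int \<lfloor>(x - c0) / s\<rfloor>" using f0 by (simp add: a_def)
  have "real a \<le> (x - c0) / s" using ra by simp
  hence l: "c0 + real a * s \<le> x" using assms by (simp add: field_simps)
  have "(x - c0) / s < real a + 1" using ra by linarith
  hence u: "x < c0 + real (a + 1) * s" using assms by (simp add: field_simps)
  have "x < c0 + real N * s" using False assms by simp
  hence "(x - c0) / s < real N" using assms by (simp add: field_simps)
  hence "real a < real N" using \<open>real a \<le> (x - c0) / s\<close> by linarith
  hence "a < N" by simp
  then show ?thesis using l u by (auto simp: in_slab_def)
qed

lemma slab_lt:
  assumes "in_slab c0 s N a x" "a + 1 \<noteq> N"
  shows "x < c0 + real (a + 1) * s"
  using assms unfolding in_slab_def by blast

lemma slab_unique:
  assumes "s > 0" "a < N" "a' < N" "in_slab c0 s N a x" "in_slab c0 s N a' x"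
  shows "a = a'"
proof (rule ccontr)
  assume "a \<noteq> a'"
  then consider "a < a'" | "a' < a" by linarith
  then show False
  proof cases
    case 1
    hence "real (a + 1) * s \<le> real a' * s" using assms by (intro mult_right_mono) auto
    moreover have "a + 1 \<noteq> N" using 1 assms by simp
    moreover have "c0 + real a' * s \<le> x" using assms(5) unfolding in_slab_def by blast
    ultimately show ?thesis using slab_lt[OF assms(4)] by linarith
  next
    case 2
    hence "real (a' + 1) * s \<le> real a * s" using assms by (intro mult_right_mono) auto
    moreover have "a' + 1 \<noteq> N" using 2 assms by simp
    moreover have "c0 + real a * s \<le> x" using assms(4) unfolding in_slab_def by blast
    ultimately show ?thesis using slab_lt[OF assms(5)] by linarith
  qed
qed

lemma slab_nest:
  assumes "s > 0" "N = 2 * M" "a < N" "in_slab c0 s N a x"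
  shows "in_slab c0 (2 * s) M (a div 2) x \<and> a div 2 < M"
proof -
  have n1: "(a div 2) * 2 \<le> a" by simp
  have r1: "real (a div 2) * 2 \<le> real a"
    using of_nat_le_iff[THEN iffD2, OF n1] by simp
  have n2: "a + 1 \<le> (a div 2 + 1) * 2" by presburger
  have r2: "real a + 1 \<le> (real (a div 2) + 1) * 2"
    using of_nat_le_iff[THEN iffD2, OF n2] by simp
  have "c0 + real (a div 2) * (2 * s) \<le> c0 + real a * s"
    using mult_right_mono[OF r1, of s] assms by (simp add: algebra_simps)
  moreover have "c0 + real (a + 1) * s \<le> c0 + real (a div 2 + 1) * (2 * s)"
    using mult_right_mono[OF r2, of s] assms by (simp add: algebra_simps)
  moreover have "a + 1 = N \<Longrightarrow> a div 2 + 1 = M" using assms(2) by presburger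
  moreover have "real N * s = real M * (2 * s)" using assms by simp
  moreover have "a div 2 < M" using assms(2,3) by presburger
  ultimately show ?thesis using assms(4) unfolding in_slab_def by (smt (verit))
qed

lemma slab_bounds:
  assumes "in_slab c0 s N a x"
  shows "c0 + real a * s \<le> x \<and> x \<le> c0 + real (a + 1) * s"
  using assms by (auto simp: in_slab_def)

lemma sq_diam:
  assumes "x \<in> cell_square org s a b" "y \<in> cell_square org s a b"
  shows "dist x y \<le> sqrt 2 * s"
proof -
  have s: "s \<ge> 0" using assms by (auto simp: cell_square_def algebra_simps)
  have "\<bar>fst x - fst y\<bar> \<le> s" "\<bar>snd x - snd y\<bar> \<le> s"
    using assms by (auto simp: cell_square_def algebra_simps)
  hence "(fst x - fst y)^2 \<le> s^2" "(snd x - snd y)^2 \<le> s^2"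
    using s by (simp_all add: power2_le_iff_abs_le)
  hence "(dist (fst x) (fst y))^2 + (dist (snd x) (snd y))^2 \<le> 2 * s^2"
    by (simp add: dist_real_def)
  hence "sqrt ((dist (fst x) (fst y))^2 + (dist (snd x) (snd y))^2) \<le> sqrt (2 * s^2)"
    using real_sqrt_le_mono by blast
  also have "\<dots> = sqrt 2 * s" using s by (simp add: real_sqrt_mult)
  finally show ?thesis using dist_Pair_Pair[of "fst x" "snd x" "fst y" "snd y"] by simp
qed

lemma proj_le:
  assumes "z \<in> diag"
  shows "dist x (proj x) \<le> dist x z"
proof -
  obtain t where z: "z = (t, t)" using assms by (auto simp: diag_def)
  obtain x1 x2 where x: "x = (x1, x2)" by (cases x)
  have A: "(x1 - (x1 + x2) / 2)^2 + (x2 - (x1 + x2) / 2)^2 \<le> (x1 - t)^2 + (x2 - t)^2"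
  proof -
    have "(x1 - t)^2 + (x2 - t)^2 - ((x1 - (x1 + x2) / 2)^2 + (x2 - (x1 + x2) / 2)^2) = 2 * ((x1 + x2) / 2 - t)^2"
      by (simp add: power2_eq_square algebra_simps)
    then show ?thesis by (smt (verit) zero_le_power2)
  qed
  have B: "dist x (proj x) = sqrt ((x1 - (x1 + x2) / 2)^2 + (x2 - (x1 + x2) / 2)^2)"
    unfolding x proj_def dist_Pair_Pair dist_real_def by simp
  have C: "dist x z = sqrt ((x1 - t)^2 + (x2 - t)^2)"
    unfolding x z dist_Pair_Pair dist_real_def by simp
  show ?thesis unfolding B C by (rule real_sqrt_le_mono[OF A])
qed


definition dd :: "int \<Rightarrow> real" where "dd k = 2 powr real_of_int k"
definition og :: "int \<Rightarrow> pt \<Rightarrow> pt" where "og k v = (fst v - dd k, snd v - dd k)"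
definition sz :: "int \<Rightarrow> real" where "sz i = 2 powr real_of_int i"
definition inC :: "int \<Rightarrow> pt \<Rightarrow> int \<Rightarrow> nat \<Rightarrow> nat \<Rightarrow> pt \<Rightarrow> bool" where
  "inC k v i a b x \<longleftrightarrow> in_slab (fst (og k v)) (sz i) (grid_N k i) a (fst x) \<and>
                        in_slab (snd (og k v)) (sz i) (grid_N k i) b (snd x)"
definition nonterm :: "int \<Rightarrow> pt \<Rightarrow> int \<Rightarrow> nat \<Rightarrow> nat \<Rightarrow> bool" where
  "nonterm k v i a b \<longleftrightarrow> cell_square (og k v) (sz i) a b \<inter> diag = {}"
definition cnt :: "int \<Rightarrow> pt \<Rightarrow> int \<Rightarrow> nat \<Rightarrow> nat \<Rightarrow> pt multiset \<Rightarrow> real" where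
  "cnt k v i a b P = real (size (filter_mset (inC k v i a b) P))"
definition cellt :: "int \<Rightarrow> pt \<Rightarrow> int \<Rightarrow> nat \<Rightarrow> nat \<Rightarrow> pt multiset \<Rightarrow> pt multiset \<Rightarrow> real" where
  "cellt k v i a b P Q = (if nonterm k v i a b then \<bar>cnt k v i a b P - cnt k v i a b Q\<bar> else 0)"
definition TT :: "int \<Rightarrow> pt \<Rightarrow> int \<Rightarrow> pt multiset \<Rightarrow> pt multiset \<Rightarrow> real" where
  "TT k v i P Q = (\<Sum>a<grid_N k i. \<Sum>b<grid_N k i. cellt k v i a b P Q)"

lemma dT_eq: "d_T_per k v P Q = (\<Sum>i\<in>{-1..k}. sz i * TT k v i P Q)"
  unfolding d_T_per_def Let_def TT_def cellt_def nonterm_def og_def dd_def sz_def cnt_def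
    cell_count_def inC_def
  by (intro sum.cong refl arg_cong2[where f="(*)"] sum.cong) auto

lemma cnt_add: "cnt k v i a b (add_mset p P) = cnt k v i a b P + (if inC k v i a b p then 1 else 0)"
  by (simp add: cnt_def)

lemma cnt_zero: "(\<forall>y\<in>#Q. \<not> inC k v i a b y) \<Longrightarrow> cnt k v i a b Q = 0"
  by (simp add: cnt_def filter_mset_eq_conv)

lemma cnt_nonneg: "cnt k v i a b Q \<ge> 0" by (simp add: cnt_def)

lemma cellt_nonneg: "cellt k v i a b P Q \<ge> 0" by (simp add: cellt_def)

lemma sz_pos: "sz i > 0" by (simp add: sz_def)
lemma sz_double: "sz (i + 1) = 2 * sz i"
  by (simp add: sz_def powr_add)
lemma gN_pos: "grid_N k i \<ge> 1" by (simp add: grid_N_def)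
lemma gN_double: "i < k \<Longrightarrow> grid_N k i = 2 * grid_N k (i + 1)"
proof -
  assume "i < k"
  hence "nat (k + 1 - i) = Suc (nat (k + 1 - (i + 1)))" by simp
  then show ?thesis by (simp add: grid_N_def)
qed
lemma span: "i \<le> k + 1 \<Longrightarrow> real (grid_N k i) * sz i = 2 * dd k"
proof -
  assume "i \<le> k + 1"
  have "real (grid_N k i) = 2 powr real (nat (k + 1 - i))"
    by (simp add: grid_N_def powr_realpow)
  also have "real (nat (k + 1 - i)) = real_of_int (k + 1 - i)" using \<open>i \<le> k + 1\<close> by simp
  finally have "real (grid_N k i) * sz i = 2 powr real_of_int (k + 1 - i) * 2 powr real_of_int i"
    by (simp add: sz_def)
  also have "\<dots> = 2 powr (real_of_int (k + 1 - i) + real_of_int i)" by (rule powr_add[symmetric])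
  also have "\<dots> = 2 powr (real_of_int k + 1)" by simp
  also have "\<dots> = 2 * dd k" by (simp add: dd_def powr_add)
  finally show ?thesis .
qed

definition box :: "int \<Rightarrow> pt \<Rightarrow> bool" where
  "box k x \<longleftrightarrow> 0 \<le> fst x \<and> fst x \<le> dd k \<and> 0 \<le> snd x \<and> snd x \<le> dd k"

lemma locate:
  assumes "box k v" "box k x" "i \<le> k + 1"
  shows "\<exists>a<grid_N k i. \<exists>b<grid_N k i. inC k v i a b x"
proof -
  have sp: "real (grid_N k i) * sz i = 2 * dd k" using span assms by blast
  have "\<exists>a<grid_N k i. in_slab (fst (og k v)) (sz i) (grid_N k i) a (fst x)"
    by (rule slab_exists[OF sz_pos gN_pos]) (use assms sp in \<open>auto simp: box_def og_def\<close>)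
  then obtain a where a: "a < grid_N k i" "in_slab (fst (og k v)) (sz i) (grid_N k i) a (fst x)"
    by blast
  have "\<exists>b<grid_N k i. in_slab (snd (og k v)) (sz i) (grid_N k i) b (snd x)"
    by (rule slab_exists[OF sz_pos gN_pos]) (use assms sp in \<open>auto simp: box_def og_def\<close>)
  then obtain b where b: "b < grid_N k i" "in_slab (snd (og k v)) (sz i) (grid_N k i) b (snd x)"
    by blast
  show ?thesis using a b by (auto simp: inC_def)
qed

lemma inC_unique:
  assumes "inC k v i a b x" "inC k v i a' b' x" "a < grid_N k i" "b < grid_N k i"
    "a' < grid_N k i" "b' < grid_N k i"
  shows "a = a' \<and> b = b'"
  using assms slab_unique[OF sz_pos] unfolding inC_def by metis

lemma inC_nest:
  assumes "i < k" "inC k v i a b x" "a < grid_N k i" "b < grid_N k i"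
  shows "inC k v (i + 1) (a div 2) (b div 2) x \<and> a div 2 < grid_N k (i + 1) \<and> b div 2 < grid_N k (i + 1)"
  using assms slab_nest[OF sz_pos gN_double[OF assms(1)]] unfolding inC_def sz_double by blast

lemma sq_nest:
  assumes "s \<ge> 0"
  shows "cell_square org s a b \<subseteq> cell_square org (2 * s) (a div 2) (b div 2)"
proof -
  have n1: "(a div 2) * 2 \<le> a" "(b div 2) * 2 \<le> b" by simp_all
  have r1: "real (a div 2) * 2 \<le> real a" "real (b div 2) * 2 \<le> real b"
    using of_nat_le_iff[THEN iffD2, OF n1(1)] of_nat_le_iff[THEN iffD2, OF n1(2)] by simp_all
  have n2: "a + 1 \<le> (a div 2 + 1) * 2" "b + 1 \<le> (b div 2 + 1) * 2" by presburger+
  have r2: "real a + 1 \<le> (real (a div 2) + 1) * 2" "real b + 1 \<le> (real (b div 2) + 1) * 2"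
    using of_nat_le_iff[THEN iffD2, OF n2(1)] of_nat_le_iff[THEN iffD2, OF n2(2)] by simp_all
  have A: "real (a div 2) * (2 * s) \<le> real a * s" "real (b div 2) * (2 * s) \<le> real b * s"
    using mult_right_mono[OF r1(1) assms] mult_right_mono[OF r1(2) assms] by (simp_all add: algebra_simps)
  have B: "real (a + 1) * s \<le> real (a div 2 + 1) * (2 * s)" "real (b + 1) * s \<le> real (b div 2 + 1) * (2 * s)"
    using mult_right_mono[OF r2(1) assms] mult_right_mono[OF r2(2) assms] by (simp_all add: algebra_simps)
  show ?thesis
  proof
    fix p assume "p \<in> cell_square org s a b"
    then show "p \<in> cell_square org (2 * s) (a div 2) (b div 2)"
      unfolding cell_square_def using A B by auto
  qed
qed

lemma inC_sq: "inC k v i a b x \<Longrightarrow> x \<in> cell_square (og k v) (sz i) a b"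
  unfolding inC_def cell_square_def using slab_bounds by auto

definition samec :: "int \<Rightarrow> pt \<Rightarrow> int \<Rightarrow> pt \<Rightarrow> pt \<Rightarrow> bool" where
  "samec k v i x y \<longleftrightarrow> (\<exists>a<grid_N k i. \<exists>b<grid_N k i. inC k v i a b x \<and> inC k v i a b y)"

lemma samec_up_nat: "samec k v i x y \<Longrightarrow> i + int n \<le> k \<Longrightarrow> samec k v (i + int n) x y"
proof (induction n)
  case 0 then show ?case by simp
next
  case (Suc n)
  then have h: "samec k v (i + int n) x y" by simp
  have lt: "i + int n < k" using Suc.prems by simp
  from h obtain a b where ab: "a < grid_N k (i + int n)" "b < grid_N k (i + int n)"
    "inC k v (i + int n) a b x" "inC k v (i + int n) a b y" by (auto simp: samec_def)
  have "i + int (Suc n) = i + int n + 1" by simp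
  then show ?case using inC_nest[OF lt ab(3) ab(1,2)] inC_nest[OF lt ab(4) ab(1,2)]
    unfolding samec_def by metis
qed

lemma samec_up: "samec k v i x y \<Longrightarrow> i \<le> j \<Longrightarrow> j \<le> k \<Longrightarrow> samec k v j x y"
  using samec_up_nat[of k v i x y "nat (j - i)"] by simp


lemma TT_ge:
  assumes all: "\<forall>a<grid_N k i. \<forall>b<grid_N k i. cellt k v i a b P' Q' \<le> cellt k v i a b P Q"
    and S: "S \<subseteq> {..<grid_N k i} \<times> {..<grid_N k i}"
    and Sg: "\<forall>(a, b)\<in>S. cellt k v i a b P' Q' + 1 \<le> cellt k v i a b P Q"
  shows "TT k v i P' Q' + real (card S) \<le> TT k v i P Q"
proof -
  define g where "g = (\<lambda>(a, b). cellt k v i a b P Q - cellt k v i a b P' Q')"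
  have eq: "TT k v i P Q - TT k v i P' Q' = sum g ({..<grid_N k i} \<times> {..<grid_N k i})"
    unfolding TT_def g_def by (simp add: sum.cartesian_product case_prod_unfold sum_subtractf)
  have "real (card S) = sum (\<lambda>_. 1) S" by simp
  also have "\<dots> \<le> sum g S" using Sg by (intro sum_mono) (auto simp: g_def)
  also have "\<dots> \<le> sum g ({..<grid_N k i} \<times> {..<grid_N k i})"
    using S all by (intro sum_mono2) (auto simp: g_def)
  finally show ?thesis using eq by simp
qed

lemma D_ge:
  assumes all: "\<forall>i\<in>{-1..k}. \<forall>a<grid_N k i. \<forall>b<grid_N k i. cellt k v i a b P' Q' \<le> cellt k v i a b P Q"
    and j: "j \<in> {-1..k}"
    and S: "S \<subseteq> {..<grid_N k j} \<times> {..<grid_N k j}"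
    and Sg: "\<forall>(a, b)\<in>S. cellt k v j a b P' Q' + 1 \<le> cellt k v j a b P Q"
  shows "d_T_per k v P' Q' + sz j * real (card S) \<le> d_T_per k v P Q"
proof -
  define h where "h = (\<lambda>i. sz i * TT k v i P Q - sz i * TT k v i P' Q')"
  have hnn: "\<forall>i\<in>{-1..k}. 0 \<le> h i"
  proof
    fix i assume i: "i \<in> {-1..k}"
    have "TT k v i P' Q' + real (card ({} :: (nat \<times> nat) set)) \<le> TT k v i P Q"
      by (rule TT_ge) (use all i in auto)
    then show "0 \<le> h i" unfolding h_def using sz_pos[of i] by (simp add: right_diff_distrib[symmetric])
  qed
  have "TT k v j P' Q' + real (card S) \<le> TT k v j P Q"
    by (rule TT_ge[OF _ S Sg]) (use all j in auto)
  hence "sz j * real (card S) \<le> h j" unfolding h_def using sz_pos[of j]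
    by (simp add: right_diff_distrib[symmetric] mult_left_mono)
  also have "h j \<le> sum h {-1..k}"
    by (rule member_le_sum) (use j hnn in auto)
  also have "sum h {-1..k} = d_T_per k v P Q - d_T_per k v P' Q'"
    unfolding h_def dT_eq by (simp add: sum_subtractf)
  finally show ?thesis by simp
qed

lemma sz_m1: "sz (-1) = 1 / 2"
  by (simp add: sz_def powr_minus)

lemma dist_diag_pt: "dist x (fst x, fst x) = \<bar>snd x - fst x\<bar>"
  by (cases x) (simp add: dist_Pair_Pair dist_real_def)

lemma diag_mem: "(t, t) \<in> diag" by (simp add: diag_def)

lemma dist_proj_le_box: "box k x \<Longrightarrow> dist x (proj x) \<le> dd k"
proof -
  assume "box k x"
  have "dist x (proj x) \<le> dist x (fst x, fst x)" by (rule proj_le[OF diag_mem])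
  also have "\<dots> \<le> dd k" using \<open>box k x\<close> by (auto simp: dist_diag_pt box_def abs_le_iff)
  finally show ?thesis .
qed

lemma k_nonneg:
  assumes "box k x" "1 \<le> infdist x diag"
  shows "0 \<le> k"
proof (rule ccontr)
  assume "\<not> 0 \<le> k"
  hence "real_of_int k \<le> -1" by simp
  hence "dd k \<le> 2 powr (-1)" unfolding dd_def by (intro powr_mono) auto
  also have "\<dots> = 1 / 2" by (simp add: powr_minus)
  finally have d: "dd k \<le> 1 / 2" .
  have "infdist x diag \<le> dist x (fst x, fst x)" by (rule infdist_le[OF diag_mem])
  also have "\<dots> \<le> dd k" using assms by (auto simp: dist_diag_pt box_def abs_le_iff)
  finally show False using d assms by simp
qed

lemma nonterm_m1:
  assumes "1 \<le> infdist x diag" "inC k v (-1) a b x"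
  shows "nonterm k v (-1) a b"
proof (rule ccontr)
  assume "\<not> nonterm k v (-1) a b"
  then obtain z where z: "z \<in> cell_square (og k v) (sz (-1)) a b" "z \<in> diag"
    by (auto simp: nonterm_def)
  have "dist x z \<le> sqrt 2 * sz (-1)" by (rule sq_diam[OF inC_sq[OF assms(2)] z(1)])
  also have "\<dots> < 1" using sqrt2_less_2 by (simp add: sz_m1)
  finally show False using infdist_le[OF z(2), of x] assms(1) by simp
qed

lemma term_dist:
  assumes "inC k v i a b x" "\<not> nonterm k v i a b"
  shows "dist x (proj x) \<le> sqrt 2 * sz i"
proof -
  obtain z where z: "z \<in> cell_square (og k v) (sz i) a b" "z \<in> diag"
    using assms by (auto simp: nonterm_def)
  have "dist x (proj x) \<le> dist x z" by (rule proj_le[OF z(2)])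
  also have "\<dots> \<le> sqrt 2 * sz i" by (rule sq_diam[OF inC_sq[OF assms(1)] z(1)])
  finally show ?thesis .
qed

lemma level_exists:
  assumes v: "box k v" and x: "box k x" and inf: "1 \<le> infdist x diag"
  shows "\<exists>j\<in>{-1..k}. \<exists>a<grid_N k j. \<exists>b<grid_N k j. inC k v j a b x \<and> nonterm k v j a b \<and>
           dist x (proj x) \<le> 4 * sz j"
proof -
  have k0: "0 \<le> k" by (rule k_nonneg[OF x inf])
  define Tm where "Tm = {j\<in>{-1..k}. \<exists>a<grid_N k j. \<exists>b<grid_N k j. inC k v j a b x \<and> \<not> nonterm k v j a b}"
  have fin: "finite Tm" unfolding Tm_def by (rule finite_subset[of _ "{-1..k}"]) auto
  show ?thesis
  proof (cases "Tm = {}")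
    case True
    obtain a b where ab: "a < grid_N k k" "b < grid_N k k" "inC k v k a b x"
      using locate[OF v x, of k] by auto
    have nt: "nonterm k v k a b" using True ab k0 unfolding Tm_def by auto
    have "dist x (proj x) \<le> dd k" by (rule dist_proj_le_box[OF x])
    also have "\<dots> \<le> 4 * sz k" by (simp add: dd_def sz_def)
    finally show ?thesis using ab nt k0 by (intro bexI[of _ k]) auto
  next
    case False
    define j1 where "j1 = Min Tm"
    have j1T: "j1 \<in> Tm" using Min_in[OF fin False] by (simp add: j1_def)
    have j1min: "\<And>j. j \<in> Tm \<Longrightarrow> j1 \<le> j" using Min_le[OF fin] by (simp add: j1_def)
    obtain a b where ab: "a < grid_N k j1" "b < grid_N k j1" "inC k v j1 a b x" "\<not> nonterm k v j1 a b"
      and j1r: "j1 \<in> {-1..k}"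
      using j1T unfolding Tm_def by auto
    have "j1 \<noteq> -1"
    proof
      assume "j1 = -1"
      then show False using nonterm_m1[OF inf, of k v a b] ab(3,4) by simp
    qed
    hence jr: "j1 - 1 \<in> {-1..k}" using j1r by auto
    have "j1 - 1 \<notin> Tm" using j1min by fastforce
    moreover obtain a' b' where ab': "a' < grid_N k (j1 - 1)" "b' < grid_N k (j1 - 1)" "inC k v (j1 - 1) a' b' x"
      using locate[OF v x, of "j1 - 1"] jr by auto
    ultimately have nt: "nonterm k v (j1 - 1) a' b'" using jr unfolding Tm_def by auto
    have "dist x (proj x) \<le> sqrt 2 * sz j1" by (rule term_dist[OF ab(3,4)])
    also have "sz j1 = 2 * sz (j1 - 1)" using sz_double[of "j1 - 1"] by simp
    also have "sqrt 2 * (2 * sz (j1 - 1)) \<le> 2 * (2 * sz (j1 - 1))"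
      using sqrt2_less_2 sz_pos[of "j1 - 1"] by (intro mult_right_mono) auto
    finally have "dist x (proj x) \<le> 4 * sz (j1 - 1)" by simp
    then show ?thesis using ab' nt jr by blast
  qed
qed


definition good :: "int \<Rightarrow> pt multiset \<Rightarrow> pt multiset \<Rightarrow> bool" where
  "good k P Q \<longleftrightarrow> (\<forall>x\<in>#P + Q. \<forall>y\<in>#P + Q. x \<noteq> y \<longrightarrow> 1 \<le> dist x y) \<and>
     (\<forall>x\<in>#P + Q. 1 \<le> infdist x diag) \<and> (\<forall>x\<in>#P + Q. box k x)"

lemma good_subL: "good k (add_mset p P) Q \<Longrightarrow> good k P Q"
  by (auto simp: good_def)
lemma good_subR: "good k P (add_mset q Q) \<Longrightarrow> good k P Q"
  by (auto simp: good_def)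

definition mixed :: "int \<Rightarrow> pt \<Rightarrow> pt multiset \<Rightarrow> pt multiset \<Rightarrow> int set" where
  "mixed k v P Q = {i\<in>{-1..k}. \<exists>a<grid_N k i. \<exists>b<grid_N k i. nonterm k v i a b \<and>
      (\<exists>p\<in>#P. inC k v i a b p) \<and> (\<exists>q\<in>#Q. inC k v i a b q)}"

lemma single_stepL:
  assumes v: "box k v" and g: "good k (add_mset x P) Q" and mx: "mixed k v (add_mset x P) Q = {}"
  shows "dist x (proj x) + 4 * d_T_per k v P Q \<le> 4 * d_T_per k v (add_mset x P) Q"
proof -
  have x: "box k x" "1 \<le> infdist x diag" using g by (auto simp: good_def)
  have cellge: "cellt k v i a b P Q + (if inC k v i a b x \<and> nonterm k v i a b then 1 else 0)
       \<le> cellt k v i a b (add_mset x P) Q"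
    if i: "i \<in> {-1..k}" and a: "a < grid_N k i" and b: "b < grid_N k i" for i a b
  proof (cases "inC k v i a b x \<and> nonterm k v i a b")
    case True
    hence "\<not> (\<exists>q\<in>#Q. inC k v i a b q)" using mx i a b unfolding mixed_def by auto
    hence "cnt k v i a b Q = 0" by (intro cnt_zero) auto
    then show ?thesis using True cnt_nonneg[of k v i a b P] by (simp add: cellt_def cnt_add)
  next
    case False
    then show ?thesis by (auto simp: cellt_def cnt_add)
  qed
  obtain j a b where j: "j \<in> {-1..k}" "a < grid_N k j" "b < grid_N k j" "inC k v j a b x"
    "nonterm k v j a b" "dist x (proj x) \<le> 4 * sz j"
    using level_exists[OF v x] by blast
  have "d_T_per k v P Q + sz j * real (card {(a, b)}) \<le> d_T_per k v (add_mset x P) Q"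
  proof (rule D_ge[OF _ j(1)])
    show "\<forall>i\<in>{-1..k}. \<forall>a<grid_N k i. \<forall>b<grid_N k i. cellt k v i a b P Q \<le> cellt k v i a b (add_mset x P) Q"
      using cellge by (smt (verit))
    show "{(a, b)} \<subseteq> {..<grid_N k j} \<times> {..<grid_N k j}" using j by auto
    show "\<forall>(a', b')\<in>{(a, b)}. cellt k v j a' b' P Q + 1 \<le> cellt k v j a' b' (add_mset x P) Q"
      using cellge[OF j(1-3)] j(4,5) by auto
  qed
  then show ?thesis using j(6) by simp
qed

lemma single_stepR:
  assumes v: "box k v" and g: "good k P (add_mset x Q)" and mx: "mixed k v P (add_mset x Q) = {}"
  shows "dist (proj x) x + 4 * d_T_per k v P Q \<le> 4 * d_T_per k v P (add_mset x Q)"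
proof -
  have x: "box k x" "1 \<le> infdist x diag" using g by (auto simp: good_def)
  have cellge: "cellt k v i a b P Q + (if inC k v i a b x \<and> nonterm k v i a b then 1 else 0)
       \<le> cellt k v i a b P (add_mset x Q)"
    if i: "i \<in> {-1..k}" and a: "a < grid_N k i" and b: "b < grid_N k i" for i a b
  proof (cases "inC k v i a b x \<and> nonterm k v i a b")
    case True
    hence "\<not> (\<exists>p\<in>#P. inC k v i a b p)" using mx i a b unfolding mixed_def by auto
    hence "cnt k v i a b P = 0" by (intro cnt_zero) auto
    then show ?thesis using True cnt_nonneg[of k v i a b Q] by (simp add: cellt_def cnt_add)
  next
    case False
    then show ?thesis by (auto simp: cellt_def cnt_add)
  qed
  obtain j a b where j: "j \<in> {-1..k}" "a < grid_N k j" "b < grid_N k j" "inC k v j a b x"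
    "nonterm k v j a b" "dist x (proj x) \<le> 4 * sz j"
    using level_exists[OF v x] by blast
  have "d_T_per k v P Q + sz j * real (card {(a, b)}) \<le> d_T_per k v P (add_mset x Q)"
  proof (rule D_ge[OF _ j(1)])
    show "\<forall>i\<in>{-1..k}. \<forall>a<grid_N k i. \<forall>b<grid_N k i. cellt k v i a b P Q \<le> cellt k v i a b P (add_mset x Q)"
      using cellge by (smt (verit))
    show "{(a, b)} \<subseteq> {..<grid_N k j} \<times> {..<grid_N k j}" using j by auto
    show "\<forall>(a', b')\<in>{(a, b)}. cellt k v j a' b' P Q + 1 \<le> cellt k v j a' b' P (add_mset x Q)"
      using cellge[OF j(1-3)] j(4,5) by auto
  qed
  then show ?thesis using j(6) by (simp add: dist_commute)
qed


lemma pair_step: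
  assumes v: "box k v" and g: "good k P Q" and mx: "mixed k v P Q \<noteq> {}"
  shows "\<exists>p q P' Q'. P = add_mset p P' \<and> Q = add_mset q Q' \<and>
           dist p q + 4 * d_T_per k v P' Q' \<le> 4 * d_T_per k v P Q"
proof -
  define M where "M = mixed k v P Q"
  have fin: "finite M" unfolding M_def mixed_def by (rule finite_subset[of _ "{-1..k}"]) auto
  define i0 where "i0 = Min M"
  have i0M: "i0 \<in> M" using Min_in[OF fin] mx by (simp add: i0_def M_def)
  have i0min: "\<And>i. i \<in> M \<Longrightarrow> i0 \<le> i" using Min_le[OF fin] by (simp add: i0_def)
  obtain a b p q where ab: "a < grid_N k i0" "b < grid_N k i0" "nonterm k v i0 a b"
      and p: "p \<in># P" "inC k v i0 a b p" and q: "q \<in># Q" "inC k v i0 a b q"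
      and i0r: "i0 \<in> {-1..k}"
    using i0M unfolding M_def mixed_def by blast
  define P' where "P' = P - {#p#}"
  define Q' where "Q' = Q - {#q#}"
  have hP: "P = add_mset p P'" using p by (simp add: P'_def)
  have hQ: "Q = add_mset q Q'" using q by (simp add: Q'_def)
  have bp: "box k p" "box k q" using g p q by (auto simp: good_def)
  have F2: "inC k v i a' b' p \<longleftrightarrow> inC k v i a' b' q"
    if "i0 \<le> i" "i \<le> k" "a' < grid_N k i" "b' < grid_N k i" for i a' b'
  proof -
    have "samec k v i0 p q" using ab p q by (auto simp: samec_def)
    hence "samec k v i p q" using samec_up that by blast
    then obtain c d where cd: "c < grid_N k i" "d < grid_N k i" "inC k v i c d p" "inC k v i c d q"
      by (auto simp: samec_def)
    show ?thesis
    proof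
      assume "inC k v i a' b' p"
      with inC_unique[OF this cd(3) that(3,4) cd(1,2)] cd show "inC k v i a' b' q" by simp
    next
      assume "inC k v i a' b' q"
      with inC_unique[OF this cd(4) that(3,4) cd(1,2)] cd show "inC k v i a' b' p" by simp
    qed
  qed
  have F1: "\<not> ((\<exists>p\<in>#P. inC k v i a' b' p) \<and> (\<exists>q\<in>#Q. inC k v i a' b' q))"
    if "i \<in> {-1..k}" "i < i0" "a' < grid_N k i" "b' < grid_N k i" "nonterm k v i a' b'" for i a' b'
  proof
    assume "(\<exists>p\<in>#P. inC k v i a' b' p) \<and> (\<exists>q\<in>#Q. inC k v i a' b' q)"
    hence "i \<in> M" using that unfolding M_def mixed_def by blast
    then show False using i0min that by fastforce
  qed
  have cellge: "cellt k v i a' b' P' Q'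
      + (if nonterm k v i a' b' \<and> inC k v i a' b' p \<and> \<not> inC k v i a' b' q then 1 else 0)
      + (if nonterm k v i a' b' \<and> inC k v i a' b' q \<and> \<not> inC k v i a' b' p then 1 else 0)
      \<le> cellt k v i a' b' P Q"
    if i: "i \<in> {-1..k}" and a': "a' < grid_N k i" and b': "b' < grid_N k i" for i a' b'
  proof -
    consider (A) "nonterm k v i a' b' \<and> inC k v i a' b' p \<and> \<not> inC k v i a' b' q"
      | (B) "nonterm k v i a' b' \<and> inC k v i a' b' q \<and> \<not> inC k v i a' b' p"
      | (C) "nonterm k v i a' b'" "inC k v i a' b' p \<longleftrightarrow> inC k v i a' b' q"
      | (D) "\<not> nonterm k v i a' b'" by blast
    then show ?thesis
    proof cases
      case A
      have "i < i0" using F2[of i a' b'] A i a' b' by force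
      hence "\<not> (\<exists>q\<in>#Q. inC k v i a' b' q)" using F1[OF i _ a' b'] A p by blast
      hence "cnt k v i a' b' Q = 0" by (intro cnt_zero) auto
      hence "cnt k v i a' b' Q' = 0" using A cnt_nonneg[of k v i a' b' Q'] by (simp add: hQ cnt_add)
      then show ?thesis using A cnt_nonneg[of k v i a' b' P'] by (simp add: cellt_def cnt_add hP hQ)
    next
      case B
      have "i < i0" using F2[of i a' b'] B i a' b' by force
      hence "\<not> (\<exists>p\<in>#P. inC k v i a' b' p)" using F1[OF i _ a' b'] B q by blast
      hence "cnt k v i a' b' P = 0" by (intro cnt_zero) auto
      hence "cnt k v i a' b' P' = 0" using B cnt_nonneg[of k v i a' b' P'] by (simp add: hP cnt_add)
      then show ?thesis using B cnt_nonneg[of k v i a' b' Q'] by (simp add: cellt_def cnt_add hP hQ)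
    next
      case C
      then show ?thesis by (cases "inC k v i a' b' p") (simp_all add: cellt_def cnt_add hP hQ)
    next
      case D
      then show ?thesis by (simp add: cellt_def)
    qed
  qed
  have all: "\<forall>i\<in>{-1..k}. \<forall>a<grid_N k i. \<forall>b<grid_N k i. cellt k v i a b P' Q' \<le> cellt k v i a b P Q"
  proof (intro ballI allI impI)
    fix i a' b' assume "i \<in> {-1..k}" "a' < grid_N k i" "b' < grid_N k i"
    from cellge[OF this] show "cellt k v i a' b' P' Q' \<le> cellt k v i a' b' P Q"
      by (smt (verit))
  qed
  have dpq: "dist p q \<le> sqrt 2 * sz i0" by (rule sq_diam[OF inC_sq[OF p(2)] inC_sq[OF q(2)]])
  show ?thesis
  proof (cases "i0 = -1")
    case True
    have "dist p q < 1" using dpq sqrt2_less_2 True by (simp add: sz_m1)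
    hence "p = q" using g p q unfolding good_def by force
    have "d_T_per k v P' Q' + sz i0 * real (card ({} :: (nat \<times> nat) set)) \<le> d_T_per k v P Q"
      by (rule D_ge[OF all i0r]) auto
    hence "P = add_mset p P' \<and> Q = add_mset q Q' \<and> dist p q + 4 * d_T_per k v P' Q' \<le> 4 * d_T_per k v P Q"
      using hP hQ \<open>p = q\<close> by auto
    then show ?thesis by blast
  next
    case False
    define j where "j = i0 - 1"
    have jr: "j \<in> {-1..k}" and jk: "j < k" and ji0: "j + 1 = i0" and jlt: "j < i0"
      using False i0r by (auto simp: j_def)
    obtain ap bp' where pa: "ap < grid_N k j" "bp' < grid_N k j" "inC k v j ap bp' p"
      using locate[OF v bp(1), of j] jr by auto
    obtain aq bq where qa: "aq < grid_N k j" "bq < grid_N k j" "inC k v j aq bq q"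
      using locate[OF v bp(2), of j] jr by auto
    have ntp: "nonterm k v j ap bp'"
    proof -
      have n: "inC k v i0 (ap div 2) (bp' div 2) p" "ap div 2 < grid_N k i0" "bp' div 2 < grid_N k i0"
        using inC_nest[OF jk pa(3) pa(1,2)] ji0 by auto
      have e: "ap div 2 = a \<and> bp' div 2 = b" by (rule inC_unique[OF n(1) p(2) n(2,3) ab(1,2)])
      have "cell_square (og k v) (sz j) ap bp' \<subseteq> cell_square (og k v) (sz i0) a b"
        using sq_nest[of "sz j" "og k v" ap bp'] sz_pos[of j] sz_double[of j] ji0 e by simp
      then show ?thesis using ab(3) unfolding nonterm_def by blast
    qed
    have ntq: "nonterm k v j aq bq"
    proof -
      have n: "inC k v i0 (aq div 2) (bq div 2) q" "aq div 2 < grid_N k i0" "bq div 2 < grid_N k i0"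
        using inC_nest[OF jk qa(3) qa(1,2)] ji0 by auto
      have e: "aq div 2 = a \<and> bq div 2 = b" by (rule inC_unique[OF n(1) q(2) n(2,3) ab(1,2)])
      have "cell_square (og k v) (sz j) aq bq \<subseteq> cell_square (og k v) (sz i0) a b"
        using sq_nest[of "sz j" "og k v" aq bq] sz_pos[of j] sz_double[of j] ji0 e by simp
      then show ?thesis using ab(3) unfolding nonterm_def by blast
    qed
    have nq: "\<not> inC k v j ap bp' q" using F1[OF jr jlt pa(1,2) ntp] pa(3) p(1) q(1) by blast
    have np: "\<not> inC k v j aq bq p" using F1[OF jr jlt qa(1,2) ntq] qa(3) p(1) q(1) by blast
    have neq: "(ap, bp') \<noteq> (aq, bq)" using nq qa(3) by auto
    have "d_T_per k v P' Q' + sz j * real (card {(ap, bp'), (aq, bq)}) \<le> d_T_per k v P Q"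
    proof (rule D_ge[OF all jr])
      show "{(ap, bp'), (aq, bq)} \<subseteq> {..<grid_N k j} \<times> {..<grid_N k j}" using pa qa by auto
      show "\<forall>(a', b')\<in>{(ap, bp'), (aq, bq)}. cellt k v j a' b' P' Q' + 1 \<le> cellt k v j a' b' P Q"
        using cellge[OF jr pa(1,2)] cellge[OF jr qa(1,2)] pa(3) qa(3) nq np ntp ntq by auto
    qed
    hence D2: "d_T_per k v P' Q' + 2 * sz j \<le> d_T_per k v P Q" using neq by simp
    have "dist p q \<le> sqrt 2 * (2 * sz j)" using dpq sz_double[of j] ji0 by simp
    also have "\<dots> \<le> 2 * (2 * sz j)" using sqrt2_less_2 sz_pos[of j] by (intro mult_right_mono) auto
    finally have "dist p q \<le> 4 * sz j" by simp
    hence "P = add_mset p P' \<and> Q = add_mset q Q' \<and> dist p q + 4 * d_T_per k v P' Q' \<le> 4 * d_T_per k v P Q"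
      using hP hQ D2 sz_pos[of j] by auto
    then show ?thesis by blast
  qed
qed

lemma am_empty: "aug_matching {#} {#} {#}"
  unfolding aug_matching_def by auto

lemma am_pair: "aug_matching P Q \<Gamma> \<Longrightarrow> aug_matching (add_mset p P) (add_mset q Q) (add_mset (p, q) \<Gamma>)"
  unfolding aug_matching_def
  by (elim exE conjE, rule_tac x="add_mset (p, q) \<Gamma>1" in exI, rule_tac x=A2 in exI, rule_tac x=B3 in exI) simp

lemma am_left: "aug_matching P Q \<Gamma> \<Longrightarrow> aug_matching (add_mset x P) Q (add_mset (x, proj x) \<Gamma>)"
  unfolding aug_matching_def
  by (elim exE conjE, rule_tac x="\<Gamma>1" in exI, rule_tac x="add_mset x A2" in exI, rule_tac x=B3 in exI) simp

lemma am_right: "aug_matching P Q \<Gamma> \<Longrightarrow> aug_matching P (add_mset x Q) (add_mset (proj x, x) \<Gamma>)"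
  unfolding aug_matching_def
  by (elim exE conjE, rule_tac x="\<Gamma>1" in exI, rule_tac x=A2 in exI, rule_tac x="add_mset x B3" in exI) simp

lemma cost_add: "match_cost (add_mset (p, q) \<Gamma>) = dist p q + match_cost \<Gamma>"
  by (simp add: match_cost_def)

lemma cost_nonneg: "0 \<le> match_cost \<Gamma>"
  unfolding match_cost_def by (induction \<Gamma>) auto

lemma dT_nonneg: "0 \<le> d_T_per k v P Q"
  unfolding dT_eq TT_def
  by (intro sum_nonneg mult_nonneg_nonneg less_imp_le[OF sz_pos] cellt_nonneg)

lemma main:
  assumes v: "box k v"
  shows "good k P Q \<Longrightarrow> \<exists>\<Gamma>. aug_matching P Q \<Gamma> \<and> match_cost \<Gamma> \<le> 4 * d_T_per k v P Q"
proof (induction "size P + size Q" arbitrary: P Q rule: less_induct)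
  case less
  show ?case
  proof (cases "mixed k v P Q = {}")
    case False
    then obtain p q P' Q' where h: "P = add_mset p P'" "Q = add_mset q Q'"
      "dist p q + 4 * d_T_per k v P' Q' \<le> 4 * d_T_per k v P Q"
      using pair_step[OF v less.prems] by blast
    have "good k P' Q'" using less.prems h good_subL good_subR by blast
    moreover have "size P' + size Q' < size P + size Q" using h by simp
    ultimately obtain \<Gamma> where "aug_matching P' Q' \<Gamma>" "match_cost \<Gamma> \<le> 4 * d_T_per k v P' Q'"
      using less.hyps by blast
    then show ?thesis using h am_pair cost_add
      by (intro exI[of _ "add_mset (p, q) \<Gamma>"]) auto
  next
    case True
    show ?thesis
    proof (cases "P = {#}")
      case False
      then obtain x P' where h: "P = add_mset x P'" by (metis multiset_cases)
      have "good k P' Q" using less.prems h good_subL by blast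
      moreover have "size P' + size Q < size P + size Q" using h by simp
      ultimately obtain \<Gamma> where "aug_matching P' Q \<Gamma>" "match_cost \<Gamma> \<le> 4 * d_T_per k v P' Q"
        using less.hyps by blast
      moreover have "dist x (proj x) + 4 * d_T_per k v P' Q \<le> 4 * d_T_per k v P Q"
        using single_stepL[OF v] less.prems True h by blast
      ultimately show ?thesis using h am_left cost_add
        by (intro exI[of _ "add_mset (x, proj x) \<Gamma>"]) auto
    next
      case Pe: True
      show ?thesis
      proof (cases "Q = {#}")
        case True
        then show ?thesis using Pe am_empty dT_nonneg[of k v P Q]
          by (intro exI[of _ "{#}"]) (auto simp: match_cost_def)
      next
        case False
        then obtain x Q' where h: "Q = add_mset x Q'" by (metis multiset_cases)
        have "good k P Q'" using less.prems h good_subR by blast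
        moreover have "size P + size Q' < size P + size Q" using h by simp
        ultimately obtain \<Gamma> where "aug_matching P Q' \<Gamma>" "match_cost \<Gamma> \<le> 4 * d_T_per k v P Q'"
          using less.hyps by blast
        moreover have "dist (proj x) x + 4 * d_T_per k v P Q' \<le> 4 * d_T_per k v P Q"
          using single_stepR[OF v] less.prems True h by blast
        ultimately show ?thesis using h am_right cost_add
          by (intro exI[of _ "add_mset (proj x, x) \<Gamma>"]) auto
      qed
    qed
  qed
qed

theorem lemma8:
  "\<exists>C::real. \<forall>(k::int) (v::pt) (P::pt multiset) (Q::pt multiset).
     (\<forall>x\<in>#P + Q. \<forall>y\<in>#P + Q. x \<noteq> y \<longrightarrow> dist x y \<ge> 1) \<and>
     (\<forall>x\<in>#P + Q. infdist x diag \<ge> 1) \<and>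
     (\<forall>x\<in>#P + Q. 0 \<le> fst x \<and> fst x \<le> 2 powr real_of_int k \<and>
                   0 \<le> snd x \<and> snd x \<le> 2 powr real_of_int k) \<and>
     0 \<le> fst v \<and> fst v \<le> 2 powr real_of_int k \<and> 0 \<le> snd v \<and> snd v \<le> 2 powr real_of_int k
     \<longrightarrow> d_W P Q \<le> C * d_T_per k v P Q"
proof (intro exI[of _ 4] allI impI)
  fix k v P Q
  assume H: "(\<forall>x\<in>#P + Q. \<forall>y\<in>#P + Q. x \<noteq> y \<longrightarrow> dist x y \<ge> 1) \<and>
     (\<forall>x\<in>#P + Q. infdist x diag \<ge> 1) \<and>
     (\<forall>x\<in>#P + Q. 0 \<le> fst x \<and> fst x \<le> 2 powr real_of_int k \<and>
                   0 \<le> snd x \<and> snd x \<le> 2 powr real_of_int k) \<and>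
     0 \<le> fst v \<and> fst v \<le> 2 powr real_of_int k \<and> 0 \<le> snd v \<and> snd v \<le> 2 powr real_of_int k"
  have v: "box k v" using H by (simp add: box_def dd_def)
  have g: "good k P Q" using H unfolding good_def box_def dd_def by blast
  obtain \<Gamma> where G: "aug_matching P Q \<Gamma>" "match_cost \<Gamma> \<le> 4 * d_T_per k v P Q"
    using main[OF v g] by blast
  have "d_W P Q \<le> match_cost \<Gamma>"
    unfolding d_W_def
  proof (rule cInf_lower)
    show "match_cost \<Gamma> \<in> {match_cost \<Gamma> |\<Gamma>. aug_matching P Q \<Gamma>}" using G by blast
    show "bdd_below {match_cost \<Gamma> |\<Gamma>. aug_matching P Q \<Gamma>}"
      by (rule bdd_belowI[of _ 0]) (auto simp: cost_nonneg)
  qed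
  then show "d_W P Q \<le> 4 * d_T_per k v P Q" using G by simp
qed

end
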